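(* Let $\mathcal{M}$ be a $W^*$-algebra, $p_0\in\mathcal{L}(\mathcal{M})$, $P_0:=\mathcal{G}_{p_0}(\mathcal{M})\cap\mathcal{M}p_0$ (an open subset of $\mathcal{M}p_0$) and $P_0^u:=\{\eta\in P_0:\eta^*\eta=p_0\}$. Let $X_1,X_2:P_0\to\mathcal{M}$ be smooth maps representing sections of the algebroid $\mathcal{A}_{p_0}(\mathcal{M})$ (i.e. $X_i(\eta g)=X_i(\eta)$ for all invertible $g\in p_0\mathcal{M}p_0$), and define $$[X_1,X_2]_{\mathcal{A}}:=[X_2,X_1]+\Big\langle\frac{\partial X_2}{\partial\eta},X_1\eta\Big\rangle-\Big\langle\frac{\partial X_1}{\partial\eta},X_2\eta\Big\rangle+\Big\langle\frac{\partial X_2}{\partial\eta^*},\eta^*X_1^*\Big\rangle-\Big\langle\frac{\partial X_1}{\partial\eta^*},\eta^*X_2^*\Big\rangle,$$ where $[X_2,X_1]=X_2X_1-X_1X_2$. If $\eta^*\big(X_i(\eta)+X_i(\eta)^*\big)\eta=0$ for all $\eta\in P_0^u$ and $i=1,2$ (i.e. $X_1,X_2$ are sections of the subbundle corresponding to partial isometries), then $X:=[X_1,X_2]_{\mathcal{A}}$ also satisfies $\eta^*\big(X(\eta)+X(\eta)^*\big)\eta=0$ for all $\eta\in P_0^u$.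
   Context: $\mathcal{L}(\mathcal{M})$ is the lattice of orthogonal projections; $\mathcal{G}(\mathcal{M})$ is the groupoid of partially invertible elements ($x\in\mathcal{M}$ with $|x|$ invertible in $p\mathcal{M}p$, $p$ the support of $|x|$), with target the left support $\mathbf{l}$ and source the right support $\mathbf{r}$; $\mathcal{L}_{p_0}(\mathcal{M})=\{\mathbf{l}(x):\mathbf{r}(x)=p_0\}$ and $\mathcal{G}_{p_0}(\mathcal{M})=\mathbf{l}^{-1}(\mathcal{L}_{p_0}(\mathcal{M}))\cap\mathbf{r}^{-1}(\mathcal{L}_{p_0}(\mathcal{M}))$. The algebroid $\mathcal{A}_{p_0}(\mathcal{M})\cong TP_0/G_0$ of $\mathcal{G}_{p_0}(\mathcal{M})\rightrightarrows\mathcal{L}_{p_0}(\mathcal{M})$ ($G_0$ the invertible elements of $p_0\mathcal{M}p_0$): a $G_0$-invariant vector field on $P_0$ with component $\vartheta:P_0\to\mathcal{M}p_0$, $\vartheta(\eta g)=\vartheta(\eta)g$, corresponds to the section $X(\mathbf{l}(\eta))=\vartheta(\eta)\eta^{-1}$. Functions are written in the complex coordinates $(\eta,\eta^* )\in\mathcal{M}p_0\oplus p_0\mathcal{M}$; $\partial/\partial\eta$ and $\partial/\partial\eta^*$ denote the partial (Fréchet) derivatives with respect to $\eta$ and $\eta^*$ treated as independent variables, and $\langle\partial F/\partial\eta,v\rangle$ denotes the derivative of $F$ in direction $v$. For a section with $\vartheta(\eta)=X(\eta)\eta$ on $P_0^u$, the condition $\eta^*\vartheta+\vartheta^*\eta=0$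 (tangency to $P_0^u$) is equivalent to $\eta^*(X+X^* )\eta=0$. *)

theory Defs
  imports "HOL-Analysis.Analysis"
begin

text \<open>An abstract unital complex C*-algebra is modelled on a type
  'a :: {real_normed_algebra_1, banach} together with a complex scalar
  multiplication sc and an involution st satisfying the C*-axioms.\<close>

definition cstar_alg :: "(complex \<Rightarrow> 'a::{real_normed_algebra_1,banach} \<Rightarrow> 'a) \<Rightarrow> ('a \<Rightarrow> 'a) \<Rightarrow> bool"
  where "cstar_alg sc st \<longleftrightarrow>
    (\<forall>x. sc 1 x = x) \<and>
    (\<forall>a b x. sc a (sc b x) = sc (a * b) x) \<and>
    (\<forall>a x y. sc a (x + y) = sc a x + sc a y) \<and>
    (\<forall>a b x. sc (a + b) x = sc a x + sc b x) \<and>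
    (\<forall>r x. sc (complex_of_real r) x = r *\<^sub>R x) \<and>
    (\<forall>a x y. sc a (x * y) = sc a x * y \<and> sc a (x * y) = x * sc a y) \<and>
    (\<forall>a x. norm (sc a x) = cmod a * norm x) \<and>
    (\<forall>x. st (st x) = x) \<and>
    (\<forall>x y. st (x + y) = st x + st y) \<and>
    (\<forall>a x. st (sc a x) = sc (cnj a) (st x)) \<and>
    (\<forall>x y. st (x * y) = st y * st x) \<and>
    (\<forall>x. norm (st x * x) = (norm x)\<^sup>2)"

definition clin_fun :: "(complex \<Rightarrow> 'a::real_normed_vector \<Rightarrow> 'a) \<Rightarrow> ('a \<Rightarrow> complex) \<Rightarrow> bool"
  where "clin_fun sc f \<longleftrightarrow> (\<forall>x y. f (x + y) = f x + f y) \<and> (\<forall>a x. f (sc a x) = a * f x)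
           \<and> (\<exists>K. \<forall>x. cmod (f x) \<le> K * norm x)"

definition fnorm :: "('a::real_normed_vector \<Rightarrow> complex) \<Rightarrow> real"
  where "fnorm f = Sup {cmod (f x) | x. norm x \<le> 1}"

text \<open>The predual is represented as a norm-closed complex subspace N of
  the dual of M such that the canonical map x \<mapsto> (f \<mapsto> f x) is an isometric
  isomorphism of M onto the dual of N.\<close>

definition wstar_alg :: "(complex \<Rightarrow> 'a::{real_normed_algebra_1,banach} \<Rightarrow> 'a) \<Rightarrow> ('a \<Rightarrow> 'a) \<Rightarrow> bool"
  where "wstar_alg sc st \<longleftrightarrow> cstar_alg sc st \<and>
    (\<exists>N :: ('a \<Rightarrow> complex) set.
       N \<subseteq> {f. clin_fun sc f} \<and>
       (\<lambda>_. 0) \<in> N \<and>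
       (\<forall>f\<in>N. \<forall>g\<in>N. (\<lambda>x. f x + g x) \<in> N) \<and>
       (\<forall>f\<in>N. \<forall>a. (\<lambda>x. a * f x) \<in> N) \<and>
       (\<forall>g. clin_fun sc g \<and> (\<forall>e>0. \<exists>f\<in>N. fnorm (\<lambda>x. f x - g x) < e) \<longrightarrow> g \<in> N) \<and>
       (\<forall>\<psi> :: ('a \<Rightarrow> complex) \<Rightarrow> complex.
          (\<forall>f\<in>N. \<forall>g\<in>N. \<psi> (\<lambda>x. f x + g x) = \<psi> f + \<psi> g) \<and>
          (\<forall>f\<in>N. \<forall>a. \<psi> (\<lambda>x. a * f x) = a * \<psi> f) \<and>
          (\<exists>K. \<forall>f\<in>N. cmod (\<psi> f) \<le> K * fnorm f)
          \<longrightarrow> (\<exists>!x. \<forall>f\<in>N. \<psi> f = f x)) \<and>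
       (\<forall>x. norm x = Sup {cmod (f x) | f. f \<in> N \<and> fnorm f \<le> 1}))"

definition proj :: "('a::times \<Rightarrow> 'a) \<Rightarrow> 'a \<Rightarrow> bool"
  where "proj st p \<longleftrightarrow> st p = p \<and> p * p = p"

definition positive :: "('a::times \<Rightarrow> 'a) \<Rightarrow> 'a \<Rightarrow> bool"
  where "positive st a \<longleftrightarrow> (\<exists>b. a = st b * b)"

definition absv :: "('a::times \<Rightarrow> 'a) \<Rightarrow> 'a \<Rightarrow> 'a"
  where "absv st x = (THE a. positive st a \<and> a * a = st x * x)"

text \<open>Right support: smallest projection p with x p = x; left support: smallest
  projection p with p x = x (order of projections: p \<le> q iff p q = p).\<close>

definition rsupp :: "('a::times \<Rightarrow> 'a) \<Rightarrow> 'a \<Rightarrow> 'a"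
  where "rsupp st x = (THE p. proj st p \<and> x * p = x \<and> (\<forall>q. proj st q \<and> x * q = x \<longrightarrow> p * q = p))"

definition lsupp :: "('a::times \<Rightarrow> 'a) \<Rightarrow> 'a \<Rightarrow> 'a"
  where "lsupp st x = (THE p. proj st p \<and> p * x = x \<and> (\<forall>q. proj st q \<and> q * x = x \<longrightarrow> p * q = p))"

definition partinv :: "('a::times \<Rightarrow> 'a) \<Rightarrow> 'a \<Rightarrow> bool"
  where "partinv st x \<longleftrightarrow>
    (let a = absv st x; p = rsupp st a in \<exists>y. p * y * p = y \<and> a * y = p \<and> y * a = p)"

definition Gpi :: "('a::times \<Rightarrow> 'a) \<Rightarrow> 'a set"
  where "Gpi st = {x. partinv st x}"

definition Lp0 :: "('a::times \<Rightarrow> 'a) \<Rightarrow> 'a \<Rightarrow> 'a set"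
  where "Lp0 st p0 = {lsupp st x | x. x \<in> Gpi st \<and> rsupp st x = p0}"

definition Gp0 :: "('a::times \<Rightarrow> 'a) \<Rightarrow> 'a \<Rightarrow> 'a set"
  where "Gp0 st p0 = {x \<in> Gpi st. lsupp st x \<in> Lp0 st p0 \<and> rsupp st x \<in> Lp0 st p0}"

definition Mp :: "'a::times \<Rightarrow> 'a set"
  where "Mp p0 = {m * p0 | m. True}"

definition P0 :: "('a::times \<Rightarrow> 'a) \<Rightarrow> 'a \<Rightarrow> 'a set"
  where "P0 st p0 = Gp0 st p0 \<inter> Mp p0"

definition P0u :: "('a::times \<Rightarrow> 'a) \<Rightarrow> 'a \<Rightarrow> 'a set"
  where "P0u st p0 = {\<eta> \<in> P0 st p0. st \<eta> * \<eta> = p0}"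

definition inv_corner :: "'a::times \<Rightarrow> 'a \<Rightarrow> bool"
  where "inv_corner p0 g \<longleftrightarrow> p0 * g * p0 = g \<and> (\<exists>h. p0 * h * p0 = h \<and> g * h = p0 \<and> h * g = p0)"

text \<open>Smoothness (C^\<infinity>) of f on S, an open subset of the closed subspace V:
  there are iterated derivatives D k x (v_1,...,v_k) (directions taken from V, stored in
  the first k entries of a sequence), each Fr\'echet differentiable in x along S with the
  next derivative as derivative, and jointly continuous.\<close>

definition vcons :: "'a \<Rightarrow> (nat \<Rightarrow> 'a) \<Rightarrow> nat \<Rightarrow> 'a"
  where "vcons v vs = (\<lambda>i. case i of 0 \<Rightarrow> v | Suc j \<Rightarrow> vs j)"

definition smooth_on :: "'a::real_normed_vector set \<Rightarrow> 'a set \<Rightarrow> ('a \<Rightarrow> 'b::real_normed_vector) \<Rightarrow> bool"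
  where "smooth_on S V f \<longleftrightarrow>
    (\<exists>D :: nat \<Rightarrow> 'a \<Rightarrow> (nat \<Rightarrow> 'a) \<Rightarrow> 'b.
       (\<forall>x vs. D 0 x vs = f x) \<and>
       (\<forall>k. \<forall>x\<in>S. \<forall>vs. (\<forall>i. vs i \<in> V) \<longrightarrow>
            ((\<lambda>y. D k y vs) has_derivative (\<lambda>v. D (Suc k) x (vcons v vs))) (at x within S)) \<and>
       (\<forall>k. continuous_on (S \<times> {vs. \<forall>i. vs i \<in> V}) (\<lambda>(x, vs). D k x vs)))"

text \<open>Partial derivatives in the complex coordinates (\<eta>, \<eta>*): with L the real
  Fr\'echet derivative, L v = \<langle>dF/d\<eta>, v\<rangle> + \<langle>dF/d\<eta>*, v*\<rangle>,
  the first complex-linear in v, the second complex-linear in v*.\<close>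

definition dfr :: "('a::real_normed_vector \<Rightarrow> 'b::real_normed_vector) \<Rightarrow> 'a set \<Rightarrow> 'a \<Rightarrow> 'a \<Rightarrow> 'b"
  where "dfr f S x v = frechet_derivative f (at x within S) v"

definition deta :: "(complex \<Rightarrow> 'a::real_normed_vector \<Rightarrow> 'a) \<Rightarrow> ('a \<Rightarrow> 'a) \<Rightarrow> 'a set \<Rightarrow> 'a \<Rightarrow> 'a \<Rightarrow> 'a"
  where "deta sc f S x v = sc (1/2) (dfr f S x v - sc \<i> (dfr f S x (sc \<i> v)))"

definition detas :: "(complex \<Rightarrow> 'a::real_normed_vector \<Rightarrow> 'a) \<Rightarrow> ('a \<Rightarrow> 'a) \<Rightarrow> ('a \<Rightarrow> 'a) \<Rightarrow> 'a set \<Rightarrow> 'a \<Rightarrow> 'a \<Rightarrow> 'a"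
  where "detas sc st f S x w = sc (1/2) (dfr f S x (st w) + sc \<i> (dfr f S x (sc \<i> (st w))))"

definition bracketA :: "(complex \<Rightarrow> 'a::{real_normed_algebra_1,banach} \<Rightarrow> 'a) \<Rightarrow> ('a \<Rightarrow> 'a) \<Rightarrow> 'a
     \<Rightarrow> ('a \<Rightarrow> 'a) \<Rightarrow> ('a \<Rightarrow> 'a) \<Rightarrow> 'a \<Rightarrow> 'a"
  where "bracketA sc st p0 X1 X2 \<eta> =
    (let S = P0 st p0 in
      (X2 \<eta> * X1 \<eta> - X1 \<eta> * X2 \<eta>)
      + deta sc X2 S \<eta> (X1 \<eta> * \<eta>) - deta sc X1 S \<eta> (X2 \<eta> * \<eta>)
      + detas sc st X2 S \<eta> (st \<eta> * st (X1 \<eta>)) - detas sc st X1 S \<eta> (st \<eta> * st (X2 \<eta>)))"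

end

theory Submission imports Defs begin

lemma cs_facts:
  assumes "cstar_alg sc st"
  shows "\<And>x. sc 1 x = x" "\<And>a b x. sc a (sc b x) = sc (a * b) x"
    "\<And>a x y. sc a (x + y) = sc a x + sc a y" "\<And>a b x. sc (a + b) x = sc a x + sc b x"
    "\<And>r x. sc (complex_of_real r) x = r *\<^sub>R x"
    "\<And>x. st (st x) = x" "\<And>x y. st (x + y) = st x + st y"
    "\<And>a x. st (sc a x) = sc (cnj a) (st x)" "\<And>x y. st (x * y) = st y * st x"
    "\<And>x. norm (st x * x) = (norm x)\<^sup>2"
  using assms unfolding cstar_alg_def by auto

lemma st_norm_le:
  fixes x :: "'a::{real_normed_algebra_1,banach}"
  assumes "cstar_alg sc st" shows "norm x \<le> norm (st x)"
proof (cases "x = 0")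
  case True thus ?thesis by simp
next
  case False
  have "(norm x)^2 \<le> norm (st x) * norm x" using cs_facts(10)[OF assms, of x] norm_mult_ineq[of "st x" x] by simp
  thus ?thesis using False by (simp add: power2_eq_square)
qed

lemma st_lemmas:
  fixes st :: "'a::{real_normed_algebra_1,banach} \<Rightarrow> 'a"
  assumes C: "cstar_alg sc st"
  shows "bounded_linear st" "\<And>r x. st (r *\<^sub>R x) = r *\<^sub>R st x" "st 0 = 0"
    "\<And>x y. st (x - y) = st x - st y" "\<And>x. st (- x) = - st x" "st 1 = 1"
    "\<And>x n. st (x ^ n) = (st x) ^ n"
proof -
  note F = cs_facts[OF C]
  show sR: "\<And>r x. st (r *\<^sub>R x) = r *\<^sub>R st x"
    by (metis F(5) F(8) complex_cnj_complex_of_real)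
  have add: "Modules.additive st" by (simp add: Modules.additive_def F(7))
  show "st 0 = 0" using Modules.additive.zero[OF add] .
  show "\<And>x y. st (x - y) = st x - st y" using Modules.additive.diff[OF add] .
  show "\<And>x. st (- x) = - st x" using Modules.additive.minus[OF add] .
  have nrm: "norm (st x) = norm x" for x
    using st_norm_le[OF C, of x] st_norm_le[OF C, of "st x"] F(6) by auto
  show "bounded_linear st"
    by (rule bounded_linear_intro[where K=1]) (auto simp: F(7) sR nrm)
  have s1: "st 1 = 1"
    by (metis F(6) F(9) mult.left_neutral mult.right_neutral)
  show "st 1 = 1" by (rule s1)
  show "\<And>x n. st (x ^ n) = (st x) ^ n"
  proof -
    fix x :: 'a and n :: nat show "st (x ^ n) = (st x) ^ n"
      by (induction n) (simp_all add: s1 F(9) power_commutes)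
  qed
qed

lemma st_exp:
  fixes st :: "'a::{real_normed_algebra_1,banach} \<Rightarrow> 'a"
  assumes C: "cstar_alg sc st"
  shows "st (exp x) = exp (st x)"
proof -
  note L = st_lemmas[OF C]
  have "st (exp x) = (\<Sum>n. st (x^n /\<^sub>R fact n))"
    unfolding exp_def using bounded_linear.suminf[OF L(1) summable_exp_generic] by simp
  also have "\<dots> = exp (st x)" unfolding exp_def by (simp add: L(2) L(7))
  finally show ?thesis .
qed


lemma unitary_mult_cancel:
  fixes U :: "'a::{real_normed_algebra_1}"
  assumes "V * U = 1"
  shows "(U * a = U * b) \<longleftrightarrow> a = b"
  by (metis assms mult.assoc mult.left_neutral)

lemma unitary_supp:
  fixes st :: "'a::{real_normed_algebra_1,banach} \<Rightarrow> 'a"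
  assumes C: "cstar_alg sc st" and U: "st U * U = 1"
  shows "absv st (U * x) = absv st x" "rsupp st (U * x) = rsupp st x"
    "partinv st (U * x) = partinv st x"
proof -
  note F = cs_facts[OF C]
  have "st (U * x) * (U * x) = st x * x"
    by (simp add: F(9) mult.assoc) (metis U mult.assoc mult.left_neutral)
  thus a: "absv st (U * x) = absv st x" unfolding absv_def by simp
  have e: "(U * x * q = U * x) \<longleftrightarrow> x * q = x" for q
    using unitary_mult_cancel[OF U, of "x*q" x] by (simp add: mult.assoc)
  show "rsupp st (U * x) = rsupp st x" unfolding rsupp_def e ..
  show "partinv st (U * x) = partinv st x" unfolding partinv_def a ..
qed

lemma rsupp_p0:
  fixes st :: "'a::{real_normed_algebra_1,banach} \<Rightarrow> 'a"
  assumes C: "cstar_alg sc st" and p0: "proj st p0" and e: "st \<eta> * \<eta> = p0" and m: "\<eta> \<in> Mp p0"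
  shows "rsupp st \<eta> = p0"
  unfolding rsupp_def
proof (rule the_equality)
  note F = cs_facts[OF C]
  obtain m where m: "\<eta> = m * p0" using m unfolding Mp_def by auto
  have ep: "\<eta> * p0 = \<eta>" using p0 unfolding proj_def m by (simp add: mult.assoc)
  show "proj st p0 \<and> \<eta> * p0 = \<eta> \<and> (\<forall>q. proj st q \<and> \<eta> * q = \<eta> \<longrightarrow> p0 * q = p0)"
    using p0 ep e by (metis mult.assoc)
  fix p assume H: "proj st p \<and> \<eta> * p = \<eta> \<and> (\<forall>q. proj st q \<and> \<eta> * q = \<eta> \<longrightarrow> p * q = p)"
  have 1: "p * p0 = p" using H p0 ep by blast
  have 2: "p0 * p = p0" using H e by (metis mult.assoc)
  have "p = st p" using H unfolding proj_def by simp
  also have "\<dots> = st (p * p0)" using 1 by simp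
  also have "\<dots> = p0 * p" using F(9) H p0 unfolding proj_def by simp
  finally show "p = p0" using 2 by simp
qed

lemma unitary_P0u:
  fixes st :: "'a::{real_normed_algebra_1,banach} \<Rightarrow> 'a"
  assumes C: "cstar_alg sc st" and p0: "proj st p0" and U: "st U * U = 1"
    and h: "\<eta> \<in> P0u st p0"
  shows "U * \<eta> \<in> P0u st p0"
proof -
  note F = cs_facts[OF C]
  note S = unitary_supp[OF C U]
  have e: "st \<eta> * \<eta> = p0" and m: "\<eta> \<in> Mp p0" and g: "\<eta> \<in> Gp0 st p0"
    using h unfolding P0u_def P0_def by auto
  have e2: "st (U*\<eta>) * (U*\<eta>) = p0"
    using e U by (simp add: F(9) mult.assoc) (metis mult.assoc mult.left_neutral)
  have m2: "U * \<eta> \<in> Mp p0" using m unfolding Mp_def by (auto simp: mult.assoc[symmetric])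
  have gi: "U * \<eta> \<in> Gpi st" using g S(3) unfolding Gp0_def Gpi_def by auto
  have r: "rsupp st (U*\<eta>) = p0" using rsupp_p0[OF C p0 e2 m2] .
  have "lsupp st (U*\<eta>) \<in> Lp0 st p0" unfolding Lp0_def using gi r by blast
  moreover have "rsupp st (U*\<eta>) \<in> Lp0 st p0" using g S(2) unfolding Gp0_def by auto
  ultimately have "U * \<eta> \<in> Gp0 st p0" using gi unfolding Gp0_def by auto
  thus ?thesis using e2 m2 unfolding P0u_def P0_def by auto
qed


lemma curve_deriv:
  fixes st :: "'a::{real_normed_algebra_1,banach} \<Rightarrow> 'a"
  assumes C: "cstar_alg sc st" and p0: "proj st p0" and h: "\<eta> \<in> P0u st p0"
    and X: "(X has_derivative L) (at \<eta> within P0 st p0)"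
    and T: "\<forall>\<xi>\<in>P0u st p0. st \<xi> * (X \<xi> + st (X \<xi>)) * \<xi> = 0"
    and K: "st K = - K"
  shows "st (K*\<eta>) * (X \<eta> + st (X \<eta>)) * \<eta> + st \<eta> * (L (K*\<eta>) + st (L (K*\<eta>))) * \<eta>
     + st \<eta> * (X \<eta> + st (X \<eta>)) * (K*\<eta>) = 0"
proof -
  note F = cs_facts[OF C]
  note SL = st_lemmas[OF C]
  define \<gamma> where "\<gamma> t = exp (t *\<^sub>R K) * \<eta>" for t :: real
  have U: "st (exp (t *\<^sub>R K)) * exp (t *\<^sub>R K) = 1" for t
  proof -
    have "st (exp (t *\<^sub>R K)) = exp (- (t *\<^sub>R K))" using st_exp[OF C] SL(2) K by simp
    thus ?thesis by (simp add: exp_add_commuting[symmetric])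
  qed
  have inP: "\<gamma> t \<in> P0u st p0" for t unfolding \<gamma>_def using unitary_P0u[OF C p0 U h] .
  have inP0: "range \<gamma> \<subseteq> P0 st p0" using inP unfolding P0u_def by auto
  have g0: "\<gamma> 0 = \<eta>" unfolding \<gamma>_def by simp
  have dg: "(\<gamma> has_derivative (\<lambda>h. h *\<^sub>R (K * \<eta>))) (at 0)"
  proof -
    have "((\<lambda>t. exp (t *\<^sub>R K)) has_derivative (\<lambda>h. h *\<^sub>R (exp (0 *\<^sub>R K) * K))) (at 0)"
      using exp_scaleR_has_vector_derivative_right[of K 0 UNIV] unfolding has_vector_derivative_def by simp
    from has_derivative_mult[OF this has_derivative_const[of \<eta>]]
    show ?thesis unfolding \<gamma>_def by (simp add: mult.assoc)
  qed
  have dX: "((\<lambda>t. X (\<gamma> t)) has_derivative (\<lambda>h. L (h *\<^sub>R (K * \<eta>)))) (at 0)"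
  proof -
    have "(X has_derivative L) (at (\<gamma> 0) within (\<gamma> ` UNIV))"
      using has_derivative_subset[OF X inP0] g0 by simp
    from has_derivative_in_compose[OF dg this] show ?thesis .
  qed
  have dsX: "((\<lambda>t. st (X (\<gamma> t))) has_derivative (\<lambda>h. st (L (h *\<^sub>R (K * \<eta>))))) (at 0)"
    using bounded_linear.has_derivative[OF SL(1) dX] .
  have dsg: "((\<lambda>t. st (\<gamma> t)) has_derivative (\<lambda>h. st (h *\<^sub>R (K * \<eta>)))) (at 0)"
    using bounded_linear.has_derivative[OF SL(1) dg] .
  define G where "G t = st (\<gamma> t) * (X (\<gamma> t) + st (X (\<gamma> t))) * \<gamma> t" for t
  have dG: "(G has_derivative (\<lambda>h. st (\<gamma> 0) * (X (\<gamma> 0) + st (X (\<gamma> 0))) * (h *\<^sub>R (K * \<eta>))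
      + (st (\<gamma> 0) * (L (h *\<^sub>R (K * \<eta>)) + st (L (h *\<^sub>R (K * \<eta>))))
      + st (h *\<^sub>R (K * \<eta>)) * (X (\<gamma> 0) + st (X (\<gamma> 0)))) * \<gamma> 0)) (at 0)"
    unfolding G_def
    by (intro has_derivative_mult has_derivative_add dsX dX dsg dg)
  have "G = (\<lambda>_. 0)" using inP T unfolding G_def by auto
  hence "(G has_derivative (\<lambda>h. 0)) (at 0)" by simp
  from has_derivative_unique[OF dG this]
  have "\<And>h. st (\<gamma> 0) * (X (\<gamma> 0) + st (X (\<gamma> 0))) * (h *\<^sub>R (K * \<eta>))
      + (st (\<gamma> 0) * (L (h *\<^sub>R (K * \<eta>)) + st (L (h *\<^sub>R (K * \<eta>))))
      + st (h *\<^sub>R (K * \<eta>)) * (X (\<gamma> 0) + st (X (\<gamma> 0)))) * \<gamma> 0 = 0" by meson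
  from this[of 1] show ?thesis unfolding g0 by (simp add: algebra_simps)
qed


lemma half_sum:
  assumes C: "cstar_alg sc st"
  shows "sc (1/2) (a - c) + sc (1/2) (a + c) = a"
proof -
  note F = cs_facts[OF C]
  have "sc (1/2) (a - c) + sc (1/2) (a + c) = sc (1/2) ((a - c) + (a + c))" using F(3) by metis
  also have "\<dots> = sc (1/2) a + sc (1/2) a" using F(3) by (simp add: algebra_simps)
  also have "\<dots> = sc (1/2 + 1/2) a" using F(4) by metis
  also have "\<dots> = a" using F(1) by simp
  finally show ?thesis .
qed

lemma bracket_eq:
  assumes C: "cstar_alg sc st"
  shows "bracketA sc st p0 X1 X2 \<eta> = (X2 \<eta> * X1 \<eta> - X1 \<eta> * X2 \<eta>)
     + dfr X2 (P0 st p0) \<eta> (X1 \<eta> * \<eta>) - dfr X1 (P0 st p0) \<eta> (X2 \<eta> * \<eta>)"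
proof -
  note F = cs_facts[OF C]
  have e: "st (st \<eta> * st (X \<eta>)) = X \<eta> * \<eta>" for X using F(6) F(9) by simp
  have "deta sc Y (P0 st p0) \<eta> (X \<eta> * \<eta>) + detas sc st Y (P0 st p0) \<eta> (st \<eta> * st (X \<eta>))
     = dfr Y (P0 st p0) \<eta> (X \<eta> * \<eta>)" for X Y
    unfolding deta_def detas_def e by (rule half_sum[OF C])
  from this[of X2 X1] this[of X1 X2] show ?thesis unfolding bracketA_def Let_def
    by (simp add: algebra_simps)
qed

lemma deriv_exists:
  fixes X :: "'a::{real_normed_algebra_1} \<Rightarrow> 'a"
  assumes "smooth_on S (Mp p0) X" "\<eta> \<in> S"
  shows "(X has_derivative dfr X S \<eta>) (at \<eta> within S)"
proof -
  obtain D where D0: "\<forall>x vs. D 0 x vs = X x" and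
    D1: "\<forall>k. \<forall>x\<in>S. \<forall>vs. (\<forall>i. vs i \<in> Mp p0) \<longrightarrow>
            ((\<lambda>y. D k y vs) has_derivative (\<lambda>v. D (Suc k) x (vcons v vs))) (at x within S)"
    using assms(1) unfolding smooth_on_def by blast
  have "0 \<in> Mp p0" unfolding Mp_def by (rule CollectI, rule exI[of _ 0]) simp
  with D1 assms(2) have "((\<lambda>y. D 0 y (\<lambda>_. 0)) has_derivative (\<lambda>v. D 1 \<eta> (vcons v (\<lambda>_. 0)))) (at \<eta> within S)"
    by auto
  hence "X differentiable (at \<eta> within S)" using D0 unfolding differentiable_def by auto
  thus ?thesis unfolding dfr_def frechet_derivative_works by (simp add: fun_eq_iff)
qed


lemma skew_K:
  fixes st :: "'a::{real_normed_algebra_1,banach} \<Rightarrow> 'a"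
  assumes C: "cstar_alg sc st" and e: "st \<eta> * \<eta> = p0" and ep: "\<eta> * p0 = \<eta>"
    and t: "st \<eta> * (Y + st Y) * \<eta> = 0"
  defines "K \<equiv> Y*\<eta>* st \<eta> - \<eta>* st \<eta>* st Y + \<eta>* st \<eta>* st Y*\<eta>* st \<eta>"
  shows "st K = - K" "K * \<eta> = Y * \<eta>"
proof -
  note F = cs_facts[OF C]
  note SL = st_lemmas[OF C]
  have "\<eta> * (st \<eta> * (Y + st Y) * \<eta>) * st \<eta> = 0" using t by simp
  hence z: "\<eta>* st \<eta>*Y*\<eta>* st \<eta> + \<eta>* st \<eta>* st Y*\<eta>* st \<eta> = 0" by (simp add: algebra_simps)
  have "st K = \<eta>* st \<eta>* st Y - Y*\<eta>* st \<eta> + \<eta>* st \<eta>*Y*\<eta>* st \<eta>"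
    unfolding K_def by (simp add: F(6) F(7) F(9) SL(4) mult.assoc)
  also have "\<dots> = - K" unfolding K_def using z by (simp add: algebra_simps eq_neg_iff_add_eq_0)
  finally show "st K = - K" .
  have eee: "\<eta> * st \<eta> * \<eta> = \<eta>" using e ep by (simp add: mult.assoc)
  have "K * \<eta> = Y * (\<eta> * st \<eta> * \<eta>) - \<eta>* st \<eta>* st Y * \<eta> + \<eta>* st \<eta>* st Y*(\<eta>* st \<eta>*\<eta>)"
    unfolding K_def by (simp add: algebra_simps)
  thus "K * \<eta> = Y * \<eta>" unfolding eee by simp
qed

theorem mainTheorem5:
  fixes sc :: "complex \<Rightarrow> 'a::{real_normed_algebra_1,banach} \<Rightarrow> 'a"
    and st :: "'a \<Rightarrow> 'a" and p0 :: 'a and X1 X2 :: "'a \<Rightarrow> 'a"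
  assumes W: "wstar_alg sc st"
    and p0: "proj st p0"
    and sm1: "smooth_on (P0 st p0) (Mp p0) X1"
    and sm2: "smooth_on (P0 st p0) (Mp p0) X2"
    and inv1: "\<forall>\<eta>\<in>P0 st p0. \<forall>g. inv_corner p0 g \<longrightarrow> X1 (\<eta> * g) = X1 \<eta>"
    and inv2: "\<forall>\<eta>\<in>P0 st p0. \<forall>g. inv_corner p0 g \<longrightarrow> X2 (\<eta> * g) = X2 \<eta>"
    and t1: "\<forall>\<eta>\<in>P0u st p0. st \<eta> * (X1 \<eta> + st (X1 \<eta>)) * \<eta> = 0"
    and t2: "\<forall>\<eta>\<in>P0u st p0. st \<eta> * (X2 \<eta> + st (X2 \<eta>)) * \<eta> = 0"
  shows "\<forall>\<eta>\<in>P0u st p0. st \<eta> * (bracketA sc st p0 X1 X2 \<eta> + st (bracketA sc st p0 X1 X2 \<eta>)) * \<eta> = 0"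
proof
  fix \<eta> assume h: "\<eta> \<in> P0u st p0"
  have C: "cstar_alg sc st" using W unfolding wstar_alg_def by simp
  note F = cs_facts[OF C]
  note SL = st_lemmas[OF C]
  let ?S = "P0 st p0"
  have hS: "\<eta> \<in> ?S" and e: "st \<eta> * \<eta> = p0" and m: "\<eta> \<in> Mp p0"
    using h unfolding P0u_def P0_def by auto
  have ep: "\<eta> * p0 = \<eta>" using m p0 unfolding Mp_def proj_def by (auto simp: mult.assoc)
  note K1 = skew_K[OF C e ep t1[rule_format, OF h]]
  note K2 = skew_K[OF C e ep t2[rule_format, OF h]]
  define a1 where "a1 = X1 \<eta>"
  define a2 where "a2 = X2 \<eta>"
  define d1 where "d1 = dfr X1 ?S \<eta> (a2 * \<eta>)"
  define d2 where "d2 = dfr X2 ?S \<eta> (a1 * \<eta>)"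
  have E2: "st (a1*\<eta>) * (a2 + st a2) * \<eta> + st \<eta> * (d2 + st d2) * \<eta>
     + st \<eta> * (a2 + st a2) * (a1*\<eta>) = 0"
    using curve_deriv[OF C p0 h deriv_exists[OF sm2 hS] t2 K1(1)] unfolding K1(2) a1_def a2_def d2_def .
  have E1: "st (a2*\<eta>) * (a1 + st a1) * \<eta> + st \<eta> * (d1 + st d1) * \<eta>
     + st \<eta> * (a1 + st a1) * (a2*\<eta>) = 0"
    using curve_deriv[OF C p0 h deriv_exists[OF sm1 hS] t1 K2(1)] unfolding K2(2) a1_def a2_def d1_def .
  have B: "bracketA sc st p0 X1 X2 \<eta> = (a2 * a1 - a1 * a2) + d2 - d1"
    unfolding bracket_eq[OF C] a1_def a2_def d1_def d2_def ..
  have "st \<eta> * (bracketA sc st p0 X1 X2 \<eta> + st (bracketA sc st p0 X1 X2 \<eta>)) * \<eta>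
    = (st (a1*\<eta>) * (a2 + st a2) * \<eta> + st \<eta> * (d2 + st d2) * \<eta>
     + st \<eta> * (a2 + st a2) * (a1*\<eta>))
    - (st (a2*\<eta>) * (a1 + st a1) * \<eta> + st \<eta> * (d1 + st d1) * \<eta>
     + st \<eta> * (a1 + st a1) * (a2*\<eta>))"
    unfolding B by (simp add: F(7) F(9) SL(4) algebra_simps)
  thus "st \<eta> * (bracketA sc st p0 X1 X2 \<eta> + st (bracketA sc st p0 X1 X2 \<eta>)) * \<eta> = 0"
    using E1 E2 by simp
qed

end
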